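(* Fix $m,n\in\mathbb N$ and convex bodies $K_0,\dots,K_m\subseteq\mathbb R^n$ containing the origin in their interiors; $\mathscr K=(K_0,\dots,K_m)$. Define \[D^{m,\circ}_2(\mathscr K)=\Big\{(x_1,\dots,x_m)\in\mathbb R^{nm}:\ h_{K_0}\Big(\sum_{i=1}^m x_i\Big)^2+\sum_{i=1}^m h_{-K_i}(x_i)^2\le1\Big\}.\] Then $(m+1)^{-1/2}D^{m,\circ}_2(\mathscr K)\subseteq D^{m,\circ}(\mathscr K)$, and equality holds if and only if $m=1$ and $K_0=-K_1$.
   Context: $h_L(u)=\sup_{y\in L}\langle u,y\rangle$ is the support function. $D^m(\mathscr K)=\{(x_1,\dots,x_m)\in(\mathbb R^n)^m: K_0\cap\bigcap_{i=1}^m(K_i+x_i)\neq\emptyset\}$ and $D^{m,\circ}(\mathscr K)$ is its polar $\{y:\langle y,x\rangle\le1\ \forall x\in D^m(\mathscr K)\}$. *)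

theory Defs
  imports "HOL-Analysis.Analysis"
begin

definition support_fun :: "'a::euclidean_space set \<Rightarrow> 'a \<Rightarrow> real" where
  "support_fun L u = (SUP y\<in>L. inner u y)"

text \<open>Points of (R^n)^m, represented as functions nat to R^n, with components 1..m
  and value 0 outside {1..m}.\<close>
definition tuples :: "nat \<Rightarrow> (nat \<Rightarrow> 'a::euclidean_space) set" where
  "tuples m = {x. \<forall>i. i \<notin> {1..m} \<longrightarrow> x i = 0}"

definition tuple_inner :: "nat \<Rightarrow> (nat \<Rightarrow> 'a::euclidean_space) \<Rightarrow> (nat \<Rightarrow> 'a) \<Rightarrow> real" where
  "tuple_inner m y x = (\<Sum>i=1..m. inner (y i) (x i))"

definition Dm :: "nat \<Rightarrow> (nat \<Rightarrow> 'a::euclidean_space set) \<Rightarrow> (nat \<Rightarrow> 'a) set" where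
  "Dm m K = {x \<in> tuples m. K 0 \<inter> (\<Inter>i\<in>{1..m}. (\<lambda>z. z + x i) ` K i) \<noteq> {}}"

definition tuple_polar :: "nat \<Rightarrow> (nat \<Rightarrow> 'a::euclidean_space) set \<Rightarrow> (nat \<Rightarrow> 'a) set" where
  "tuple_polar m D = {y \<in> tuples m. \<forall>x\<in>D. tuple_inner m y x \<le> 1}"

definition Dm_polar :: "nat \<Rightarrow> (nat \<Rightarrow> 'a::euclidean_space set) \<Rightarrow> (nat \<Rightarrow> 'a) set" where
  "Dm_polar m K = tuple_polar m (Dm m K)"

definition Dm_polar2 :: "nat \<Rightarrow> (nat \<Rightarrow> 'a::euclidean_space set) \<Rightarrow> (nat \<Rightarrow> 'a) set" where
  "Dm_polar2 m K = {x \<in> tuples m.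
     (support_fun (K 0) (\<Sum>i=1..m. x i))\<^sup>2 + (\<Sum>i=1..m. (support_fun (uminus ` K i) (x i))\<^sup>2) \<le> 1}"

definition tuple_scale :: "real \<Rightarrow> (nat \<Rightarrow> 'a::euclidean_space) set \<Rightarrow> (nat \<Rightarrow> 'a) set" where
  "tuple_scale c D = (\<lambda>x i. c *\<^sub>R x i) ` D"

end

theory Submission
  imports Defs
begin

lemma sf_eq:
  assumes "y \<in> L" "\<And>z. z \<in> L \<Longrightarrow> inner u z \<le> inner u y"
  shows "support_fun L u = inner u y"
  unfolding support_fun_def
  by (rule cSup_eq_maximum) (use assms in auto)

lemma sf_max:
  fixes L :: "'a::euclidean_space set"
  assumes "compact L" "L \<noteq> {}"
  obtains y where "y \<in> L" "support_fun L u = inner u y" "\<And>z. z \<in> L \<Longrightarrow> inner u z \<le> inner u y"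
proof -
  have "continuous_on L (inner u)" by (intro continuous_intros)
  then obtain y where "y \<in> L" "\<forall>z\<in>L. inner u z \<le> inner u y"
    using continuous_attains_sup[OF assms] by blast
  then show ?thesis using that sf_eq by blast
qed

lemma sf_ge:
  fixes L :: "'a::euclidean_space set"
  assumes "compact L" "y \<in> L"
  shows "inner u y \<le> support_fun L u"
proof -
  obtain w where "w \<in> L" "support_fun L u = inner u w" "\<And>z. z \<in> L \<Longrightarrow> inner u z \<le> inner u w"
    using sf_max[OF assms(1)] assms(2) by blast
  then show ?thesis using assms(2) by simp
qed

lemma sf_scale:
  fixes L :: "'a::euclidean_space set"
  assumes "compact L" "L \<noteq> {}" "t \<ge> 0"
  shows "support_fun L (t *\<^sub>R u) = t * support_fun L u"
proof -
  obtain w where w: "w \<in> L" "support_fun L u = inner u w" "\<And>z. z \<in> L \<Longrightarrow> inner u z \<le> inner u w"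
    using sf_max[OF assms(1,2)] by blast
  have "support_fun L (t *\<^sub>R u) = inner (t *\<^sub>R u) w"
    by (rule sf_eq) (use w assms(3) in \<open>auto intro: mult_left_mono\<close>)
  then show ?thesis using w by simp
qed

lemma sf_zero:
  assumes "L \<noteq> {}" shows "support_fun L 0 = 0"
  unfolding support_fun_def using assms by simp

lemma sf_nonneg:
  fixes L :: "'a::euclidean_space set"
  assumes "compact L" "0 \<in> L" shows "0 \<le> support_fun L u"
  using sf_ge[OF assms, of u] by simp

lemma sf_pos:
  fixes L :: "'a::euclidean_space set"
  assumes "compact L" "0 \<in> interior L" "u \<noteq> 0"
  shows "0 < support_fun L u"
proof -
  obtain e where e: "e > 0" "ball 0 e \<subseteq> L"
    using assms(2) mem_interior by blast
  define y where "y = (e / 2 / norm u) *\<^sub>R u"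
  have "norm y = e/2" using assms(3) e(1) by (simp add: y_def)
  then have "y \<in> L" using e by (auto simp: dist_norm)
  have "inner u y = e/2 * norm u"
    using assms(3) by (simp add: y_def power2_norm_eq_inner[symmetric] power2_eq_square)
  also have "\<dots> > 0" using e(1) assms(3) by simp
  finally show ?thesis using sf_ge[OF assms(1) \<open>y \<in> L\<close>, of u] by simp
qed

lemma sf_neg: "support_fun (uminus ` L) u = support_fun L (- u)"
  unfolding support_fun_def by (simp add: image_image)

lemma sf_subset:
  fixes L1 L2 :: "'a::euclidean_space set"
  assumes "compact L2" "convex L2" "L2 \<noteq> {}" "compact L1" "\<And>u. support_fun L1 u = support_fun L2 u"
  shows "L1 \<subseteq> L2"
proof
  fix p assume p: "p \<in> L1"
  show "p \<in> L2"
  proof (rule ccontr)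
    assume "p \<notin> L2"
    then obtain a b where ab: "inner a p < b" "\<forall>x\<in>L2. inner a x > b"
      using separating_hyperplane_closed_point[OF assms(2) compact_imp_closed[OF assms(1)]] by blast
    obtain w where w: "w \<in> L2" "support_fun L2 (-a) = inner (-a) w"
      using sf_max[OF assms(1,3)] by blast
    have "inner (-a) p \<le> support_fun L1 (-a)" using sf_ge[OF assms(4) p] .
    also have "\<dots> = inner (-a) w" using assms(5) w by simp
    finally show False using ab w by auto
  qed
qed

lemma char:
  fixes K :: "nat \<Rightarrow> 'a::euclidean_space set"
  assumes KC: "\<And>i. i \<le> m \<Longrightarrow> compact (K i)" and KN: "\<And>i. i \<le> m \<Longrightarrow> K i \<noteq> {}"
  shows "y \<in> Dm_polar m K \<longleftrightarrow> y \<in> tuples m \<and>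
    support_fun (K 0) (\<Sum>i=1..m. y i) + (\<Sum>i=1..m. support_fun (uminus ` K i) (y i)) \<le> 1"
    (is "_ \<longleftrightarrow> _ \<and> ?H \<le> 1")
proof
  assume y: "y \<in> Dm_polar m K"
  then have yt: "y \<in> tuples m" and yb: "\<forall>x\<in>Dm m K. tuple_inner m y x \<le> 1"
    by (auto simp: Dm_polar_def tuple_polar_def)
  obtain z where z: "z \<in> K 0" "support_fun (K 0) (\<Sum>i=1..m. y i) = inner (\<Sum>i=1..m. y i) z"
    using sf_max[OF KC KN, of 0] by blast
  have "\<forall>i\<in>{1..m}. \<exists>w. w \<in> uminus ` K i \<and> support_fun (uminus ` K i) (y i) = inner (y i) w"
  proof
    fix i assume "i \<in> {1..m}"
    then have "compact (uminus ` K i)" "uminus ` K i \<noteq> {}"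
      using KC KN compact_negations by auto
    then show "\<exists>w. w \<in> uminus ` K i \<and> support_fun (uminus ` K i) (y i) = inner (y i) w"
      using sf_max by metis
  qed
  then obtain w where w: "\<And>i. i \<in> {1..m} \<Longrightarrow> w i \<in> uminus ` K i \<and> support_fun (uminus ` K i) (y i) = inner (y i) (w i)"
    by metis
  define x where "x = (\<lambda>i. if i \<in> {1..m} then z + w i else 0)"
  have xt: "x \<in> tuples m" by (auto simp: x_def tuples_def)
  have "z \<in> (\<Inter>i\<in>{1..m}. (\<lambda>z. z + x i) ` K i)"
  proof
    fix i assume i: "i \<in> {1..m}"
    have "- w i \<in> K i" using w[OF i] by auto
    moreover have "z = - w i + x i" using i by (simp add: x_def)
    ultimately show "z \<in> (\<lambda>z. z + x i) ` K i" by blast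
  qed
  then have "x \<in> Dm m K" using z xt unfolding Dm_def by blast
  then have "tuple_inner m y x \<le> 1" using yb by blast
  moreover have "tuple_inner m y x = ?H"
  proof -
    have "tuple_inner m y x = (\<Sum>i=1..m. inner (y i) z + inner (y i) (w i))"
      unfolding tuple_inner_def by (rule sum.cong) (auto simp: x_def inner_add_right)
    also have "\<dots> = ?H"
      using z w by (simp add: sum.distrib inner_sum_left)
    finally show ?thesis .
  qed
  ultimately show "y \<in> tuples m \<and> ?H \<le> 1" using yt by simp
next
  assume a: "y \<in> tuples m \<and> ?H \<le> 1"
  have "tuple_inner m y x \<le> 1" if x: "x \<in> Dm m K" for x
  proof -
    obtain z where z: "z \<in> K 0" "\<And>i. i \<in> {1..m} \<Longrightarrow> z \<in> (\<lambda>z. z + x i) ` K i"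
      using x unfolding Dm_def by blast
    have "z - x i \<in> K i" if "i \<in> {1..m}" for i using z(2)[OF that] by auto
    then have "- (z - x i) \<in> uminus ` K i" if "i \<in> {1..m}" for i using that by blast
    then have le: "inner (y i) (x i) \<le> inner (y i) z + support_fun (uminus ` K i) (y i)"
      if i: "i \<in> {1..m}" for i
    proof -
      have "compact (uminus ` K i)" using KC i compact_negations by auto
      then have "inner (y i) (- (z - x i)) \<le> support_fun (uminus ` K i) (y i)"
        using sf_ge \<open>\<And>i. i \<in> {1..m} \<Longrightarrow> - (z - x i) \<in> uminus ` K i\<close>[OF i] by blast
      then show ?thesis by (simp add: inner_diff_right)
    qed
    have "tuple_inner m y x \<le> (\<Sum>i=1..m. inner (y i) z + support_fun (uminus ` K i) (y i))"
      unfolding tuple_inner_def by (rule sum_mono) (use le in auto)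
    also have "\<dots> = inner (\<Sum>i=1..m. y i) z + (\<Sum>i=1..m. support_fun (uminus ` K i) (y i))"
      by (simp add: sum.distrib inner_sum_left)
    also have "\<dots> \<le> ?H" using sf_ge[OF KC z(1)] by simp
    finally show ?thesis using a by simp
  qed
  then show "y \<in> Dm_polar m K" using a by (auto simp: Dm_polar_def tuple_polar_def)
qed


lemma spec_sums:
  fixes K :: "nat \<Rightarrow> 'a::euclidean_space set"
  assumes m: "m \<ge> 1" and KN: "\<And>i. i \<le> m \<Longrightarrow> K i \<noteq> {}"
  shows "(\<Sum>i=1..m. (if i = 1 then v else 0)) = v"
    "(\<Sum>i=1..m. support_fun (uminus ` K i) (if i = 1 then v else 0)) = support_fun (uminus ` K 1) v"
    "(\<Sum>i=1..m. (support_fun (uminus ` K i) (if i = 1 then v else 0))\<^sup>2) = (support_fun (uminus ` K 1) v)\<^sup>2"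
proof -
  have one: "1 \<in> {1..m}" using m by simp
  show "(\<Sum>i=1..m. (if i = 1 then v else 0)) = v"
    using one by (simp add: sum.delta)
  have "(\<Sum>i=1..m. support_fun (uminus ` K i) (if i = 1 then v else 0))
      = (\<Sum>i=1..m. (if i = 1 then support_fun (uminus ` K 1) v else 0))"
    by (rule sum.cong) (auto intro!: sf_zero simp: KN)
  then show "(\<Sum>i=1..m. support_fun (uminus ` K i) (if i = 1 then v else 0)) = support_fun (uminus ` K 1) v"
    using one by (simp add: sum.delta)
  have "(\<Sum>i=1..m. (support_fun (uminus ` K i) (if i = 1 then v else 0))\<^sup>2)
      = (\<Sum>i=1..m. (if i = 1 then (support_fun (uminus ` K 1) v)\<^sup>2 else 0))"
    by (rule sum.cong) (auto intro!: sf_zero simp: KN)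
  then show "(\<Sum>i=1..m. (support_fun (uminus ` K i) (if i = 1 then v else 0))\<^sup>2) = (support_fun (uminus ` K 1) v)\<^sup>2"
    using one by (simp add: sum.delta)
qed

theorem proposition5p8:
  fixes m :: nat and K :: "nat \<Rightarrow> 'a::euclidean_space set"
  assumes "m \<ge> 1"
    and "\<And>i. i \<le> m \<Longrightarrow> convex (K i)"
    and "\<And>i. i \<le> m \<Longrightarrow> compact (K i)"
    and "\<And>i. i \<le> m \<Longrightarrow> 0 \<in> interior (K i)"
  shows "tuple_scale (inverse (sqrt (real m + 1))) (Dm_polar2 m K) \<subseteq> Dm_polar m K \<and>
         (tuple_scale (inverse (sqrt (real m + 1))) (Dm_polar2 m K) = Dm_polar m K
           \<longleftrightarrow> (m = 1 \<and> K 0 = uminus ` K 1))"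
proof -
  note m = assms(1)
  have KC: "\<And>i. i \<le> m \<Longrightarrow> compact (K i)" using assms(3) .
  have K0: "\<And>i. i \<le> m \<Longrightarrow> 0 \<in> K i" using assms(4) interior_subset by blast
  then have KN: "\<And>i. i \<le> m \<Longrightarrow> K i \<noteq> {}" by blast
  have KCn: "\<And>i. i \<le> m \<Longrightarrow> compact (uminus ` K i)" using KC compact_negations by blast
  have KNn: "\<And>i. i \<le> m \<Longrightarrow> uminus ` K i \<noteq> {}" using KN by blast
  define c where "c = inverse (sqrt (real m + 1))"
  have c: "c > 0" by (simp add: c_def)
  have cinv: "inverse c ^ 2 = real m + 1" by (simp add: c_def)
  let ?H = "\<lambda>y. support_fun (K 0) (\<Sum>i=1..m. y i) + (\<Sum>i=1..m. support_fun (uminus ` K i) (y i))"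
  let ?Q = "\<lambda>y. (support_fun (K 0) (\<Sum>i=1..m. y i))\<^sup>2 + (\<Sum>i=1..m. (support_fun (uminus ` K i) (y i))\<^sup>2)"
  have charI: "y \<in> Dm_polar m K \<longleftrightarrow> y \<in> tuples m \<and> ?H y \<le> 1" for y
    by (rule char[OF KC KN])
  have incl: "tuple_scale c (Dm_polar2 m K) \<subseteq> Dm_polar m K"
  proof
    fix y assume "y \<in> tuple_scale c (Dm_polar2 m K)"
    then obtain x where x: "x \<in> Dm_polar2 m K" and y: "y = (\<lambda>i. c *\<^sub>R x i)"
      by (auto simp: tuple_scale_def)
    have xt: "x \<in> tuples m" and xq: "?Q x \<le> 1" using x by (auto simp: Dm_polar2_def)
    have yt: "y \<in> tuples m" using xt by (auto simp: y tuples_def)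
    have "?H y = c * ?H x"
    proof -
      have "(\<Sum>i=1..m. y i) = c *\<^sub>R (\<Sum>i=1..m. x i)" by (simp add: y scaleR_sum_right)
      then have 1: "support_fun (K 0) (\<Sum>i=1..m. y i) = c * support_fun (K 0) (\<Sum>i=1..m. x i)"
        using sf_scale[OF KC KN, of 0 c] c by simp
      have "(\<Sum>i=1..m. support_fun (uminus ` K i) (y i)) = (\<Sum>i=1..m. c * support_fun (uminus ` K i) (x i))"
        by (rule sum.cong) (auto simp: y intro!: sf_scale KCn KNn less_imp_le[OF c])
      then show ?thesis using 1 by (simp add: sum_distrib_left distrib_left)
    qed
    moreover have "?H x \<le> sqrt (real m + 1)"
    proof -
      define a where "a = (\<lambda>j. if j = 0 then support_fun (K 0) (\<Sum>i=1..m. x i) else support_fun (uminus ` K j) (x j))"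
      have set: "{0..m} = insert 0 {1..m}" by auto
      have s1: "(\<Sum>j\<in>{0..m}. a j) = ?H x"
        unfolding set by (simp add: a_def)
      have s2: "(\<Sum>j\<in>{0..m}. (a j)\<^sup>2) = ?Q x"
        unfolding set by (simp add: a_def)
      have "(\<Sum>j\<in>{0..m}. a j)\<^sup>2 \<le> (\<Sum>j\<in>{0..m}. (a j)\<^sup>2) * card {0..m}"
        by (rule sum_squared_le_sum_of_squares)
      also have "\<dots> \<le> 1 * (real m + 1)"
        using xq s2 by (intro mult_mono) auto
      finally have "(?H x)\<^sup>2 \<le> real m + 1" using s1 by simp
      then show ?thesis by (rule real_le_rsqrt)
    qed
    ultimately have "?H y \<le> c * sqrt (real m + 1)" using c by simp
    also have "\<dots> = 1" by (simp add: c_def)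
    finally show "y \<in> Dm_polar m K" using charI yt by blast
  qed
  have m1: "1 \<le> m" using m .
  have Hspec: "?H (\<lambda>i. if i = 1 then t *\<^sub>R v else 0) = t * support_fun (K 0) v + t * support_fun (uminus ` K 1) v"
    if t: "t \<ge> 0" for t v
  proof -
    have "?H (\<lambda>i. if i = 1 then t *\<^sub>R v else 0) = support_fun (K 0) (t *\<^sub>R v) + support_fun (uminus ` K 1) (t *\<^sub>R v)"
      using spec_sums[OF m1 KN, where v="t *\<^sub>R v"] by simp
    also have "\<dots> = t * support_fun (K 0) v + t * support_fun (uminus ` K 1) v"
      using sf_scale[OF KC KN t] sf_scale[OF KCn KNn t] m1 by simp
    finally show ?thesis .
  qed
  have Qspec: "?Q (\<lambda>i. if i = 1 then t *\<^sub>R v else 0) = (t * support_fun (K 0) v)\<^sup>2 + (t * support_fun (uminus ` K 1) v)\<^sup>2"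
    if t: "t \<ge> 0" for t v
  proof -
    have "?Q (\<lambda>i. if i = 1 then t *\<^sub>R v else 0) = (support_fun (K 0) (t *\<^sub>R v))\<^sup>2 + (support_fun (uminus ` K 1) (t *\<^sub>R v))\<^sup>2"
      using spec_sums[OF m1 KN, where v="t *\<^sub>R v"] by simp
    also have "\<dots> = (t * support_fun (K 0) v)\<^sup>2 + (t * support_fun (uminus ` K 1) v)\<^sup>2"
      using sf_scale[OF KC KN t] sf_scale[OF KCn KNn t] m1 by simp
    finally show ?thesis .
  qed
  have Ypos: "support_fun (uminus ` K 1) v > 0" if "v \<noteq> 0" for v
    using sf_pos[OF KC assms(4), of 1 "-v"] m1 that by (simp add: sf_neg)
  have Anonneg: "support_fun (K 0) v \<ge> 0" for v
    using sf_nonneg[OF KC K0, of 0] by simp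
  have eqI: "tuple_scale c (Dm_polar2 m K) = Dm_polar m K \<longleftrightarrow> (m = 1 \<and> K 0 = uminus ` K 1)"
  proof
    assume eq: "tuple_scale c (Dm_polar2 m K) = Dm_polar m K"
    have key: "(real m + 1) * ((support_fun (K 0) v)\<^sup>2 + (support_fun (uminus ` K 1) v)\<^sup>2)
               \<le> (support_fun (K 0) v + support_fun (uminus ` K 1) v)\<^sup>2"
      if pos: "support_fun (K 0) v + support_fun (uminus ` K 1) v > 0" for v
    proof -
      define A where "A = support_fun (K 0) v"
      define B where "B = support_fun (uminus ` K 1) v"
      have S: "A + B > 0" using pos by (simp add: A_def B_def)
      define t where "t = 1 / (A + B)"
      have t: "t \<ge> 0" using S by (simp add: t_def)
      define y where "y = (\<lambda>i::nat. if i = 1 then t *\<^sub>R v else (0::'a))"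
      have yt: "y \<in> tuples m" using m1 by (auto simp: tuples_def y_def)
      have "?H y = t * A + t * B" unfolding y_def A_def B_def by (rule Hspec[OF t])
      also have "\<dots> = 1" using S by (simp add: t_def add_divide_distrib[symmetric])
      finally have "y \<in> Dm_polar m K" using charI yt by simp
      then have "y \<in> tuple_scale c (Dm_polar2 m K)" using eq by simp
      then obtain x where x: "x \<in> Dm_polar2 m K" and yx: "y = (\<lambda>i. c *\<^sub>R x i)"
        by (auto simp: tuple_scale_def)
      define s where "s = t / c"
      have s: "s \<ge> 0" using t c by (simp add: s_def)
      have "x = (\<lambda>i. if i = 1 then s *\<^sub>R v else 0)"
      proof
        fix i
        have "y i = c *\<^sub>R x i" using yx by simp
        then have "x i = inverse c *\<^sub>R y i" using c by simp
        then show "x i = (if i = 1 then s *\<^sub>R v else 0)"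
          by (simp add: y_def s_def divide_inverse mult.commute)
      qed
      then have "?Q x = (s * A)\<^sup>2 + (s * B)\<^sup>2" unfolding A_def B_def using Qspec[OF s] by simp
      moreover have "?Q x \<le> 1" using x by (simp add: Dm_polar2_def)
      ultimately have "s\<^sup>2 * (A\<^sup>2 + B\<^sup>2) \<le> 1" by (simp add: power_mult_distrib algebra_simps)
      moreover have "s = inverse c * (1 / (A + B))" by (simp add: s_def t_def divide_inverse)
      then have "s\<^sup>2 = (real m + 1) * (1 / (A + B)\<^sup>2)"
        using cinv by (simp add: power_divide)
      ultimately have "(real m + 1) * (1 / (A + B)\<^sup>2) * (A\<^sup>2 + B\<^sup>2) \<le> 1" by simp
      then have "(real m + 1) * (A\<^sup>2 + B\<^sup>2) / (A + B)\<^sup>2 \<le> 1" by simp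
      then have "(real m + 1) * (A\<^sup>2 + B\<^sup>2) \<le> (A + B)\<^sup>2"
        using S by (simp add: pos_divide_le_eq)
      then show ?thesis by (simp add: A_def B_def)
    qed
    obtain b :: 'a where b: "b \<noteq> 0" using nonzero_Basis nonempty_Basis by blast
    have "m = 1"
    proof (rule ccontr)
      assume "m \<noteq> 1"
      then have m2: "real m + 1 \<ge> 3" using m1 by linarith
      define A where "A = support_fun (K 0) b"
      define B where "B = support_fun (uminus ` K 1) b"
      have A: "A \<ge> 0" and B: "B > 0" using Anonneg Ypos[OF b] by (auto simp: A_def B_def)
      have "(real m + 1) * (A\<^sup>2 + B\<^sup>2) \<le> (A + B)\<^sup>2" using key[of b] A B by (simp add: A_def B_def)
      moreover have "(A + B)\<^sup>2 \<le> 2 * (A\<^sup>2 + B\<^sup>2)"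
      proof -
        have "0 \<le> (A - B)\<^sup>2" by simp
        then show ?thesis by (simp add: power2_sum power2_diff algebra_simps)
      qed
      moreover have "A\<^sup>2 + B\<^sup>2 > 0" using B by (simp add: add_nonneg_pos)
      ultimately have "(real m + 1) * (A\<^sup>2 + B\<^sup>2) \<le> 2 * (A\<^sup>2 + B\<^sup>2)" by linarith
      then have "real m + 1 \<le> 2" using mult_right_le_imp_le \<open>A\<^sup>2 + B\<^sup>2 > 0\<close> by blast
      then show False using m2 by linarith
    qed
    have same: "support_fun (K 0) v = support_fun (uminus ` K 1) v" for v
    proof (cases "v = 0")
      case True then show ?thesis using sf_zero[OF KN[of 0]] sf_zero[OF KNn[of 1]] m1 by simp
    next
      case False
      define A where "A = support_fun (K 0) v"
      define B where "B = support_fun (uminus ` K 1) v"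
      have A: "A \<ge> 0" and B: "B > 0" using Anonneg Ypos[OF False] by (auto simp: A_def B_def)
      have "2 * (A\<^sup>2 + B\<^sup>2) \<le> (A + B)\<^sup>2" using key[of v] A B \<open>m = 1\<close> by (simp add: A_def B_def)
      then have "(A - B)\<^sup>2 \<le> 0" by (simp add: power2_eq_square algebra_simps)
      then have "A = B" by simp
      then show ?thesis by (simp add: A_def B_def)
    qed
    have c0: "compact (K 0)" "convex (K 0)" "K 0 \<noteq> {}" using KC KN assms(2) by auto
    have c1: "compact (uminus ` K 1)" "convex (uminus ` K 1)" "uminus ` K 1 \<noteq> {}"
      using KCn KNn assms(2) m1 convex_negations by auto
    have "K 0 \<subseteq> uminus ` K 1" by (rule sf_subset[OF c1 c0(1)]) (use same in simp)
    moreover have "uminus ` K 1 \<subseteq> K 0" by (rule sf_subset[OF c0 c1(1)]) (use same in simp)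
    ultimately show "m = 1 \<and> K 0 = uminus ` K 1" using \<open>m = 1\<close> by blast
  next
    assume h: "m = 1 \<and> K 0 = uminus ` K 1"
    have "Dm_polar m K \<subseteq> tuple_scale c (Dm_polar2 m K)"
    proof
      fix y assume "y \<in> Dm_polar m K"
      then have yt: "y \<in> tuples m" and yH: "?H y \<le> 1" using charI by auto
      define A where "A = support_fun (K 0) (y 1)"
      have A: "A \<ge> 0" using Anonneg by (simp add: A_def)
      have "?H y = 2 * A" using h by (simp add: A_def)
      with yH have A2: "2 * A \<le> 1" by simp
      define x where "x = (\<lambda>i. sqrt 2 *\<^sub>R y i)"
      have xt: "x \<in> tuples m" using yt by (auto simp: x_def tuples_def)
      have s2: "sqrt 2 \<ge> (0::real)" by simp
      have "?Q x = 4 * A\<^sup>2"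
        using h sf_scale[OF KC KN s2, of 0] by (simp add: x_def A_def power_mult_distrib)
      also have "\<dots> \<le> 1"
      proof -
        have "(2 * A)\<^sup>2 \<le> 1\<^sup>2" using A A2 by (intro power_mono) auto
        then show ?thesis by (simp add: power_mult_distrib)
      qed
      finally have "x \<in> Dm_polar2 m K" using xt by (simp add: Dm_polar2_def)
      moreover have "y = (\<lambda>i. c *\<^sub>R x i)" using h by (simp add: x_def c_def)
      ultimately show "y \<in> tuple_scale c (Dm_polar2 m K)" by (auto simp: tuple_scale_def)
    qed
    with incl show "tuple_scale c (Dm_polar2 m K) = Dm_polar m K" by blast
  qed
  show ?thesis using incl eqI by (simp add: c_def)
qed

end
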